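(* Let $n\geq 1$ and let $L$ be a Lie subalgebra of $\mathbb{W}_n$ with $\mathrm{GKdim}(L) = n$. Then $\dim_\Bbbk(L_{2,0}) = \infty$.
   Context: $\Bbbk$ is a field of characteristic zero, $\mathbb{W}_n = \sum_{k=1}^n \Bbbk[x_1,\dots,x_n]\partial_k$, $\partial_k = \partial/\partial x_k$. For a subalgebra $L$, $L_{2,0} = L \cap x_1^2\mathbb{W}_n = L\cap \sum_{k=1}^n x_1^2\Bbbk[x_1,\dots,x_n]\partial_k$. $\mathrm{GKdim}$ denotes Gelfand--Kirillov dimension of a Lie algebra: the supremum over finite-dimensional subspaces $V$ of the growth rate $\limsup_k \log\dim(V + C_1(V)+\dots+C_k(V))/\log k$, where $C_0(V)=V$ and $C_k(V) = [C_{k-1}(V),V]$. *)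

theory Defs
  imports Complex_Main "HOL-Library.Poly_Mapping" "HOL-Library.Function_Algebras"
          "HOL-Library.Extended_Real" "HOL-Library.Liminf_Limsup"
begin

text \<open>Polynomials in countably many variables x_0, x_1, ... over 'k:
  finitely supported maps from monomials (exponent vectors) to coefficients.
  Variable x_i of the paper is variable (i-1) here.\<close>
type_synonym 'k mpoly = "(nat \<Rightarrow>\<^sub>0 nat) \<Rightarrow>\<^sub>0 'k"

definition var_poly :: "nat \<Rightarrow> 'k::comm_ring_1 mpoly" where
  "var_poly i = Poly_Mapping.single (Poly_Mapping.single i 1) 1"

definition const_poly :: "'k::comm_ring_1 \<Rightarrow> 'k mpoly" where
  "const_poly c = Poly_Mapping.single 0 c"

definition poly_in :: "nat \<Rightarrow> 'k::comm_ring_1 mpoly \<Rightarrow> bool" where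
  "poly_in n p \<longleftrightarrow> (\<forall>m\<in>Poly_Mapping.keys p. \<forall>j. n \<le> j \<longrightarrow> Poly_Mapping.lookup m j = 0)"

definition pdiff :: "nat \<Rightarrow> 'k::comm_ring_1 mpoly \<Rightarrow> 'k mpoly" where
  "pdiff i p = (\<Sum>m\<in>Poly_Mapping.keys p. Poly_Mapping.single (m - Poly_Mapping.single i 1)
                                 (of_nat (Poly_Mapping.lookup m i) * Poly_Mapping.lookup p m))"

text \<open>Vector fields sum_k v k * d/dx_k, represented as coefficient functions.\<close>
type_synonym 'k vfield = "nat \<Rightarrow> 'k mpoly"

definition W :: "nat \<Rightarrow> 'k::comm_ring_1 vfield set" where
  "W n = {v. \<forall>i. (n \<le> i \<longrightarrow> v i = 0) \<and> poly_in n (v i)}"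

definition vscale :: "'k::comm_ring_1 \<Rightarrow> 'k vfield \<Rightarrow> 'k vfield" where
  "vscale c v = (\<lambda>j. const_poly c * v j)"

definition lie :: "nat \<Rightarrow> 'k::comm_ring_1 vfield \<Rightarrow> 'k vfield \<Rightarrow> 'k vfield" where
  "lie n v w = (\<lambda>j. \<Sum>i<n. v i * pdiff i (w j) - w i * pdiff i (v j))"

abbreviation vspan :: "'k::field vfield set \<Rightarrow> 'k vfield set" where
  "vspan \<equiv> module.span vscale"

abbreviation vdim :: "'k::field vfield set \<Rightarrow> nat" where
  "vdim \<equiv> vector_space.dim vscale"

definition lie_subalgebra :: "nat \<Rightarrow> 'k::field vfield set \<Rightarrow> bool" where
  "lie_subalgebra n L \<longleftrightarrow> L \<subseteq> W n \<and> 0 \<in> L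
     \<and> (\<forall>u\<in>L. \<forall>v\<in>L. u + v \<in> L)
     \<and> (\<forall>c. \<forall>u\<in>L. vscale c u \<in> L)
     \<and> (\<forall>u\<in>L. \<forall>v\<in>L. lie n u v \<in> L)"

fun lower_central :: "nat \<Rightarrow> 'k::field vfield set \<Rightarrow> nat \<Rightarrow> 'k vfield set" where
  "lower_central n V 0 = vspan V"
| "lower_central n V (Suc k) = vspan {lie n a b | a b. a \<in> lower_central n V k \<and> b \<in> V}"

definition growth_dim :: "nat \<Rightarrow> 'k::field vfield set \<Rightarrow> nat \<Rightarrow> nat" where
  "growth_dim n V k = vdim (vspan (\<Union>i\<le>k. lower_central n V i))"

definition GKdim :: "nat \<Rightarrow> 'k::field vfield set \<Rightarrow> ereal" where
  "GKdim n L = (SUP F\<in>{F. finite F \<and> F \<subseteq> L}.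
      limsup (\<lambda>k. ereal (ln (real (growth_dim n (vspan F) k)) / ln (real k))))"

text \<open>L_{2,0} = L \<inter> x_1^2 W_n: all coefficients divisible by x_1^2.\<close>
definition L20 :: "nat \<Rightarrow> 'k::field vfield set \<Rightarrow> 'k vfield set" where
  "L20 n L = {v \<in> L. \<forall>j. \<exists>g. v j = var_poly 0 ^ 2 * g}"

end

theory Submission
  imports Defs "HOL-Library.FuncSet" "HOL-Real_Asymp.Real_Asymp"
begin

lemma const_poly_lookup: "Poly_Mapping.lookup (const_poly c * p) m = c * Poly_Mapping.lookup p m"
  unfolding const_poly_def mult_map_scale_conv_mult[symmetric]
  by (simp add: Poly_Mapping.map.rep_eq when_def)

lemma vscale_module: "module (vscale :: 'k::field \<Rightarrow> 'k vfield \<Rightarrow> 'k vfield)"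
proof
  fix a b :: 'k and x y :: "'k vfield"
  show "vscale a (x + y) = vscale a x + vscale a y"
    by (rule ext) (simp add: vscale_def distrib_left)
  show "vscale (a + b) x = vscale a x + vscale b x"
    by (rule ext) (simp add: vscale_def const_poly_def Poly_Mapping.single_add distrib_right)
  show "vscale a (vscale b x) = vscale (a * b) x"
    by (rule ext) (simp add: vscale_def const_poly_def mult.assoc[symmetric] Poly_Mapping.mult_single)
  show "vscale 1 x = x"
    by (rule ext) (simp add: vscale_def const_poly_def)
qed

interpretation vs: vector_space "vscale :: 'k::field \<Rightarrow> 'k vfield \<Rightarrow> 'k vfield"
  using vscale_module unfolding vector_space_def module_def by blast

lemma dim_bound:
  fixes f :: "'k::field vfield \<Rightarrow> 'k vfield"
  assumes hom: "module_hom vscale vscale f"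
    and S: "vs.subspace S" and SE: "f ` S \<subseteq> vspan E" and fE: "finite E" and fB: "finite B"
    and ker: "\<And>v. v \<in> S \<Longrightarrow> f v = 0 \<Longrightarrow> v \<in> vspan B"
  shows "vdim S \<le> card B + card E"
proof -
  obtain I where I1: "I \<subseteq> f ` S" and I2: "vs.independent I" and I3: "f ` S \<subseteq> vspan I"
    by (rule vs.maximal_independent_subset)
  have "I \<subseteq> vspan E" using I1 SE by blast
  then have fI: "finite I" and cI: "card I \<le> card E"
    using vs.independent_span_bound[OF fE I2] by auto
  have "\<forall>i\<in>I. \<exists>v. v \<in> S \<and> f v = i" using I1 by blast
  then obtain g where g: "\<And>i. i \<in> I \<Longrightarrow> g i \<in> S \<and> f (g i) = i" by metis
  define T where "T = g ` I"
  have fT: "finite T" and cT: "card T \<le> card I" using fI by (auto simp: T_def card_image_le)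
  have fTI: "f ` T = I" using g by (force simp: T_def image_iff)
  have TS: "vspan T \<subseteq> S" using g S by (intro vs.span_minimal) (auto simp: T_def)
  have main: "S \<subseteq> vspan (B \<union> T)"
  proof
    fix v assume v: "v \<in> S"
    then have "f v \<in> vspan (f ` T)" using I3 fTI by blast
    also have "vspan (f ` T) = f ` vspan T" by (rule module_hom.span_image[OF hom])
    finally obtain w where w: "w \<in> vspan T" "f v = f w" by blast
    have "w \<in> S" using w TS by blast
    then have "v - w \<in> S" using S v vs.subspace_diff by blast
    moreover have "f (v - w) = 0" using w module_hom.diff[OF hom] by simp
    ultimately have "v - w \<in> vspan B" using ker by blast
    then have "v - w \<in> vspan (B \<union> T)" using vs.span_mono[of B "B \<union> T"] by blast
    moreover have "w \<in> vspan (B \<union> T)" using w vs.span_mono[of T "B \<union> T"] by blast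
    ultimately have "(v - w) + w \<in> vspan (B \<union> T)" by (rule vs.span_add)
    then show "v \<in> vspan (B \<union> T)" by simp
  qed
  have "vdim S \<le> card (B \<union> T)" using vs.dim_le_card[OF main] fB fT by simp
  also have "\<dots> \<le> card B + card T" by (rule card_Un_le)
  finally show ?thesis using cT cI by linarith
qed

lemma sum_fun_apply': "(\<Sum>a\<in>A. f a) x = (\<Sum>a\<in>A. f a x)"
  by (induction A rule: infinite_finite_induct) auto

lemma poly_expand: "p = (\<Sum>m\<in>Poly_Mapping.keys p. Poly_Mapping.single m (Poly_Mapping.lookup p m))"
proof (rule poly_mapping_eqI)
  fix k
  have "Poly_Mapping.lookup (\<Sum>m\<in>Poly_Mapping.keys p. Poly_Mapping.single m (Poly_Mapping.lookup p m)) k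
     = (\<Sum>m\<in>Poly_Mapping.keys p. (Poly_Mapping.lookup p m when m = k))"
    by (simp add: Poly_Mapping.lookup_sum Poly_Mapping.lookup_single)
  also have "\<dots> = Poly_Mapping.lookup p k"
    by (cases "k \<in> Poly_Mapping.keys p") (auto simp: when_def in_keys_iff)
  finally show "Poly_Mapping.lookup p k = Poly_Mapping.lookup (\<Sum>m\<in>Poly_Mapping.keys p. Poly_Mapping.single m (Poly_Mapping.lookup p m)) k" by simp
qed

definition trunc :: "'k::comm_ring_1 mpoly \<Rightarrow> 'k mpoly" where
  "trunc p = Poly_Mapping.mapp (\<lambda>m c. if Poly_Mapping.lookup m 0 < 2 then c else 0) p"

lemma lookup_trunc: "Poly_Mapping.lookup (trunc p) m = (if Poly_Mapping.lookup m 0 < 2 then Poly_Mapping.lookup p m else 0)"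
  by (auto simp: trunc_def Poly_Mapping.lookup_mapp when_def in_keys_iff)

definition piv :: "'k::comm_ring_1 vfield \<Rightarrow> 'k vfield" where
  "piv v = (\<lambda>j. trunc (v j))"

lemma piv_hom: "module_hom vscale vscale (piv :: 'k::field vfield \<Rightarrow> 'k vfield)"
proof -
  have m: "module (vscale :: 'k::field \<Rightarrow> 'k vfield \<Rightarrow> 'k vfield)" by (rule vscale_module)
  show ?thesis
  proof (rule module_hom.intro[OF m m], unfold_locales)
    fix a b :: "'k vfield" and r :: 'k
    show "piv (a + b) = piv a + piv b"
      by (rule ext, rule poly_mapping_eqI) (simp add: piv_def lookup_trunc Poly_Mapping.lookup_add)
    show "piv (vscale r b) = vscale r (piv b)"
      by (rule ext, rule poly_mapping_eqI) (simp add: piv_def vscale_def lookup_trunc const_poly_lookup)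
  qed
qed

lemma var_sq: "(var_poly 0 :: 'k::comm_ring_1 mpoly) ^ 2 = Poly_Mapping.single (Poly_Mapping.single 0 2) 1"
proof -
  have "Poly_Mapping.single 0 1 + Poly_Mapping.single 0 1 = (Poly_Mapping.single 0 2 :: nat \<Rightarrow>\<^sub>0 nat)"
    by (metis one_add_one Poly_Mapping.single_add)
  then show ?thesis
    by (simp add: var_poly_def power2_eq_square Poly_Mapping.mult_single del: Poly_Mapping.single_numeral)
qed

lemma trunc_zero_div:
  fixes p :: "'k::comm_ring_1 mpoly"
  assumes "trunc p = 0"
  shows "\<exists>g. p = var_poly 0 ^ 2 * g"
proof -
  define X :: "nat \<Rightarrow>\<^sub>0 nat" where "X = Poly_Mapping.single 0 2"
  have ge: "\<And>m. m \<in> Poly_Mapping.keys p \<Longrightarrow> X + (m - X) = m"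
  proof -
    fix m assume "m \<in> Poly_Mapping.keys p"
    then have "Poly_Mapping.lookup (trunc p) m = 0" "Poly_Mapping.lookup p m \<noteq> 0"
      using assms by (auto simp: in_keys_iff)
    then have "\<not> Poly_Mapping.lookup m 0 < 2" by (auto simp: lookup_trunc split: if_splits)
    then show "X + (m - X) = m"
      by (intro poly_mapping_eqI) (auto simp: X_def Poly_Mapping.lookup_add Poly_Mapping.lookup_minus Poly_Mapping.lookup_single when_def simp del: Poly_Mapping.single_numeral)
  qed
  define g where "g = (\<Sum>m\<in>Poly_Mapping.keys p. Poly_Mapping.single (m - X) (Poly_Mapping.lookup p m))"
  have "var_poly 0 ^ 2 * g = (\<Sum>m\<in>Poly_Mapping.keys p. Poly_Mapping.single (X + (m - X)) (Poly_Mapping.lookup p m))"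
    by (simp add: var_sq X_def[symmetric] g_def sum_distrib_left Poly_Mapping.mult_single del: Poly_Mapping.single_numeral)
  also have "\<dots> = (\<Sum>m\<in>Poly_Mapping.keys p. Poly_Mapping.single m (Poly_Mapping.lookup p m))"
    by (rule sum.cong) (auto simp: ge)
  also have "\<dots> = p" by (rule poly_expand[symmetric])
  finally show ?thesis by metis
qed

definition bx :: "nat \<Rightarrow> 'k::comm_ring_1 mpoly \<Rightarrow> bool" where
  "bx e p \<longleftrightarrow> (\<forall>m\<in>Poly_Mapping.keys p. \<forall>i. Poly_Mapping.lookup m i \<le> e)"

definition Q :: "nat \<Rightarrow> 'k::comm_ring_1 vfield set" where
  "Q e = {v. \<forall>j. bx e (v j)}"

lemma bx_zero[simp]: "bx e 0" by (simp add: bx_def)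

lemma bx_mono: "bx a p \<Longrightarrow> a \<le> b \<Longrightarrow> bx b p"
  unfolding bx_def using le_trans by blast

lemma bx_add: "bx e p \<Longrightarrow> bx e q \<Longrightarrow> bx e (p + q)"
  using Poly_Mapping.keys_add[of p q] by (force simp: bx_def)

lemma bx_uminus: "bx e p \<Longrightarrow> bx e (- p)"
  by (simp add: bx_def)

lemma bx_diff: "bx e p \<Longrightarrow> bx e q \<Longrightarrow> bx e (p - q)"
  using bx_add[of e p "-q"] bx_uminus[of e q] by simp

lemma bx_sum: "(\<And>x. x \<in> A \<Longrightarrow> bx e (f x)) \<Longrightarrow> bx e (sum f A)"
  by (induction A rule: infinite_finite_induct) (auto intro: bx_add)

lemma bx_const: "bx e p \<Longrightarrow> bx e (const_poly c * p)"
  by (auto simp: bx_def in_keys_iff const_poly_lookup)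

lemma bx_mult: "bx a p \<Longrightarrow> bx b q \<Longrightarrow> bx (a + b) (p * q)"
proof -
  assume p: "bx a p" and q: "bx b q"
  show ?thesis unfolding bx_def
  proof (intro ballI allI)
    fix m i assume "m \<in> Poly_Mapping.keys (p * q)"
    then obtain x y where "m = x + y" "x \<in> Poly_Mapping.keys p" "y \<in> Poly_Mapping.keys q"
      using Poly_Mapping.keys_mult[of p q] by blast
    then show "Poly_Mapping.lookup m i \<le> a + b"
      using p q by (auto simp: bx_def Poly_Mapping.lookup_add intro: add_mono)
  qed
qed

lemma bx_pdiff: "bx e p \<Longrightarrow> bx e (pdiff i p)"
  unfolding pdiff_def
proof (rule bx_sum)
  fix m assume p: "bx e p" and m: "m \<in> Poly_Mapping.keys p"
  show "bx e (Poly_Mapping.single (m - Poly_Mapping.single i 1) (of_nat (Poly_Mapping.lookup m i) * Poly_Mapping.lookup p m))"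
    using p m by (auto simp: bx_def Poly_Mapping.lookup_minus intro: le_trans[OF diff_le_self])
qed

lemma Q_subspace: "vs.subspace (Q e)"
  unfolding vs.subspace_def Q_def vscale_def by (auto intro: bx_add bx_const)

lemma Q_mono: "a \<le> b \<Longrightarrow> Q a \<subseteq> Q b"
  unfolding Q_def by (auto intro: bx_mono)

lemma lie_Q: "v \<in> Q a \<Longrightarrow> w \<in> Q b \<Longrightarrow> lie n v w \<in> Q (a + b)"
proof -
  assume v: "v \<in> Q a" and w: "w \<in> Q b"
  have "bx (a + b) (v i * pdiff i (w j) - w i * pdiff i (v j))" for i j
  proof (rule bx_diff)
    show "bx (a + b) (v i * pdiff i (w j))" using v w by (auto simp: Q_def intro: bx_mult bx_pdiff)
    have "bx (b + a) (w i * pdiff i (v j))" using v w by (auto simp: Q_def intro: bx_mult bx_pdiff)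
    then show "bx (a + b) (w i * pdiff i (v j))" by (simp add: add.commute)
  qed
  then show ?thesis unfolding Q_def lie_def by (auto intro: bx_sum)
qed

definition Mset :: "nat \<Rightarrow> nat \<Rightarrow> (nat \<Rightarrow>\<^sub>0 nat) set" where
  "Mset n e = {m. (\<forall>i. Poly_Mapping.lookup m i \<le> e) \<and> (\<forall>i. n \<le> i \<longrightarrow> Poly_Mapping.lookup m i = 0) \<and> Poly_Mapping.lookup m 0 < 2}"

definition ej :: "nat \<Rightarrow> 'k::comm_ring_1 mpoly \<Rightarrow> 'k vfield" where
  "ej j p = (\<lambda>j'. if j' = j then p else 0)"

definition Eset :: "nat \<Rightarrow> nat \<Rightarrow> 'k::comm_ring_1 vfield set" where
  "Eset n e = (\<lambda>(j, m). ej j (Poly_Mapping.single m 1)) ` ({..<n} \<times> Mset n e)"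

lemma Mset_card: assumes "n \<ge> 1" shows "finite (Mset n e) \<and> card (Mset n e) \<le> 2 * (e + 1) ^ (n - 1)"
proof -
  define A where "A = (\<lambda>i::nat. if i = 0 then {..<2::nat} else {..e})"
  define r where "r = (\<lambda>m::nat \<Rightarrow>\<^sub>0 nat. (\<lambda>i. if i < n then Poly_Mapping.lookup m i else undefined))"
  have inj: "inj_on r (Mset n e)"
  proof (rule inj_onI)
    fix x y assume x: "x \<in> Mset n e" and y: "y \<in> Mset n e" and "r x = r y"
    then have "\<And>i. i < n \<Longrightarrow> Poly_Mapping.lookup x i = Poly_Mapping.lookup y i"
    proof -
      fix i assume "i < n"
      have "r x i = r y i"
        using \<open>r x = r y\<close> by simp
      then show "Poly_Mapping.lookup x i = Poly_Mapping.lookup y i" using \<open>i < n\<close> by (simp add: r_def)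
    qed
    then show "x = y"
    proof (intro poly_mapping_eqI)
      fix i assume h: "\<And>i. i < n \<Longrightarrow> Poly_Mapping.lookup x i = Poly_Mapping.lookup y i"
      show "Poly_Mapping.lookup x i = Poly_Mapping.lookup y i"
      proof (cases "i < n")
        case True then show ?thesis using h by blast
      next
        case False then show ?thesis using x y unfolding Mset_def by simp
      qed
    qed
  qed
  have sub: "r ` Mset n e \<subseteq> PiE {..<n} A"
    unfolding r_def Mset_def A_def by (auto simp: PiE_iff extensional_def split: if_splits)
  have fin: "finite (PiE {..<n} A)" by (simp add: A_def finite_PiE)
  have eqn: "{..<n} = insert 0 {1..<n}" using assms by auto
  have "card (PiE {..<n} A) = (\<Prod>i<n. card (A i))" by (simp add: card_PiE)
  also have "\<dots> = (\<Prod>i\<in>insert 0 {1..<n}. card (A i))" by (simp only: eqn)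
  also have "\<dots> = card (A 0) * (\<Prod>i\<in>{1..<n}. card (A i))"
    by simp
  also have "(\<Prod>i\<in>{1..<n}. card (A i)) = (\<Prod>i\<in>{1..<n}. e + 1)"
    by (rule prod.cong) (auto simp: A_def)
  also have "\<dots> = (e + 1) ^ (n - 1)" by simp
  finally have c: "card (PiE {..<n} A) = 2 * (e + 1) ^ (n - 1)" by (simp add: A_def)
  have "finite (Mset n e)" using inj sub fin finite_imageD finite_subset by blast
  moreover have "card (Mset n e) \<le> card (PiE {..<n} A)"
    using card_inj_on_le[OF inj sub fin] .
  ultimately show ?thesis using c by simp
qed

lemma Eset_card: assumes "n \<ge> 1" shows "finite (Eset n e) \<and> card (Eset n e) \<le> n * (2 * (e + 1) ^ (n - 1))"
proof -
  have f: "finite ({..<n} \<times> Mset n e)" using Mset_card[OF assms] by simp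
  have "card (Eset n e) \<le> card ({..<n} \<times> Mset n e)" unfolding Eset_def by (rule card_image_le[OF f])
  also have "\<dots> = n * card (Mset n e)" by (simp add: card_cartesian_product)
  also have "\<dots> \<le> n * (2 * (e + 1) ^ (n - 1))" using Mset_card[OF assms] by simp
  finally show ?thesis using f by (simp add: Eset_def)
qed

lemma trunc_zero[simp]: "trunc 0 = 0"
  by (rule poly_mapping_eqI) (simp add: lookup_trunc)

lemma ej_expand: "ej j p = (\<Sum>m\<in>Poly_Mapping.keys p. vscale (Poly_Mapping.lookup p m) (ej j (Poly_Mapping.single m 1)))"
proof (rule ext)
  fix j'
  show "ej j p j' = (\<Sum>m\<in>Poly_Mapping.keys p. vscale (Poly_Mapping.lookup p m) (ej j (Poly_Mapping.single m 1))) j'"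
  proof (cases "j' = j")
    case True
    have "(\<Sum>m\<in>Poly_Mapping.keys p. vscale (Poly_Mapping.lookup p m) (ej j (Poly_Mapping.single m 1))) j'
        = (\<Sum>m\<in>Poly_Mapping.keys p. Poly_Mapping.single m (Poly_Mapping.lookup p m))"
      using True by (simp add: sum_fun_apply' vscale_def ej_def const_poly_def Poly_Mapping.mult_single)
    then show ?thesis using True poly_expand[of p] by (simp add: ej_def)
  next
    case False
    then show ?thesis by (simp add: sum_fun_apply' vscale_def ej_def)
  qed
qed

lemma piv_span:
  assumes v: "v \<in> W n" "v \<in> Q e"
  shows "piv v \<in> vspan (Eset n e)"
proof -
  have eq: "piv v = (\<Sum>j<n. ej j (trunc (v j)))"
  proof (rule ext)
    fix j'
    have "(\<Sum>j<n. ej j (trunc (v j))) j' = (\<Sum>j<n. if j' = j then trunc (v j) else 0)"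
      by (simp add: sum_fun_apply' ej_def)
    also have "\<dots> = (if j' < n then trunc (v j') else 0)"
      by (cases "j' < n") (simp_all add: sum.delta')
    also have "\<dots> = piv v j'" using v(1) by (auto simp: piv_def W_def)
    finally show "piv v j' = (\<Sum>j<n. ej j (trunc (v j))) j'" by simp
  qed
  have "ej j (trunc (v j)) \<in> vspan (Eset n e)" if j: "j < n" for j
  proof -
    have "ej j (Poly_Mapping.single m 1) \<in> Eset n e" if m: "m \<in> Poly_Mapping.keys (trunc (v j))" for m
    proof -
      have t: "Poly_Mapping.lookup (trunc (v j)) m \<noteq> 0" using m by (simp add: in_keys_iff)
      then have m0: "Poly_Mapping.lookup m 0 < 2" and mk: "m \<in> Poly_Mapping.keys (v j)"
        by (auto simp: lookup_trunc in_keys_iff split: if_splits)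
      have "m \<in> Mset n e" using m0 mk v unfolding Mset_def Q_def bx_def W_def poly_in_def by blast
      then show ?thesis using j unfolding Eset_def by (intro image_eqI[of _ _ "(j, m)"]) auto
    qed
    then show ?thesis
      by (subst ej_expand, intro vs.span_sum vs.span_scale vs.span_base) auto
  qed
  then show ?thesis unfolding eq by (auto intro!: vs.span_sum)
qed

lemma L_subspace: "lie_subalgebra n L \<Longrightarrow> vs.subspace L"
  unfolding lie_subalgebra_def vs.subspace_def by blast

lemma W_Q: assumes "v \<in> W n" shows "\<exists>e. v \<in> Q e"
proof -
  define X where "X = (\<Union>j<n. \<Union>m\<in>Poly_Mapping.keys (v j). (\<lambda>i. Poly_Mapping.lookup m i) ` {..<n})"
  have fX: "finite X" unfolding X_def by auto
  have "bx (Max (insert 0 X)) (v j)" for j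
  proof (cases "j < n")
    case True
    show ?thesis unfolding bx_def
    proof (intro ballI allI)
      fix m i assume m: "m \<in> Poly_Mapping.keys (v j)"
      show "Poly_Mapping.lookup m i \<le> Max (insert 0 X)"
      proof (cases "i < n")
        case True
        then have "Poly_Mapping.lookup m i \<in> X" using m \<open>j < n\<close> unfolding X_def by blast
        then show ?thesis using fX by simp
      next
        case False
        then have "Poly_Mapping.lookup m i = 0" using assms m unfolding W_def poly_in_def by auto
        then show ?thesis by simp
      qed
    qed
  next
    case False
    then show ?thesis using assms by (simp add: W_def)
  qed
  then show ?thesis unfolding Q_def by blast
qed

lemma finite_Q: assumes "finite F" "F \<subseteq> W n" shows "\<exists>d. F \<subseteq> Q d"
  using assms
proof (induction F rule: finite_induct)
  case empty then show ?case by simp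
next
  case (insert x F)
  then obtain d where d: "F \<subseteq> Q d" by auto
  obtain e where e: "x \<in> Q e" using W_Q insert by blast
  have "insert x F \<subseteq> Q (max d e)" using d e Q_mono[of d "max d e"] Q_mono[of e "max d e"] by auto
  then show ?case by blast
qed

lemma lc_bound:
  assumes L: "lie_subalgebra n L" and F: "F \<subseteq> L" "F \<subseteq> Q d"
  shows "lower_central n (vspan F) i \<subseteq> L \<inter> Q ((i + 1) * d)"
proof (induction i)
  case 0
  have "vspan F \<subseteq> L" using vs.span_minimal[OF F(1) L_subspace[OF L]] .
  moreover have "vspan F \<subseteq> Q d" using vs.span_minimal[OF F(2) Q_subspace] .
  ultimately show ?case by (simp add: vs.span_span)
next
  case (Suc i)
  have VL: "vspan F \<subseteq> L" using vs.span_minimal[OF F(1) L_subspace[OF L]] .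
  have VQ: "vspan F \<subseteq> Q d" using vs.span_minimal[OF F(2) Q_subspace] .
  let ?G = "{lie n a b | a b. a \<in> lower_central n (vspan F) i \<and> b \<in> vspan F}"
  have GL: "?G \<subseteq> L \<inter> Q ((i + 1) * d + d)"
  proof (rule subsetI)
    fix x assume "x \<in> ?G"
    then obtain a b where x: "x = lie n a b" and a: "a \<in> lower_central n (vspan F) i" and b: "b \<in> vspan F"
      by blast
    have aL: "a \<in> L" "a \<in> Q ((i + 1) * d)" using a Suc by auto
    have bL: "b \<in> L" "b \<in> Q d" using b VL VQ by auto
    have "lie n a b \<in> L" using aL bL L unfolding lie_subalgebra_def by blast
    moreover have "lie n a b \<in> Q ((i + 1) * d + d)" by (rule lie_Q[OF aL(2) bL(2)])
    ultimately show "x \<in> L \<inter> Q ((i + 1) * d + d)" using x by blast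
  qed
  have 1: "vspan ?G \<subseteq> L" by (rule vs.span_minimal[OF _ L_subspace[OF L]]) (use GL in blast)
  have 2: "vspan ?G \<subseteq> Q ((i + 1) * d + d)" by (rule vs.span_minimal[OF _ Q_subspace]) (use GL in blast)
  have e: "(Suc i + 1) * d = (i + 1) * d + d" by simp
  show ?case using 1 2 unfolding e lower_central.simps by blast
qed

lemma growth_bound:
  fixes L :: "'k::field vfield set"
  assumes n: "n \<ge> 1" and L: "lie_subalgebra n L" and B: "finite B" "L20 n L \<subseteq> vspan B"
    and F: "finite F" "F \<subseteq> L"
  shows "\<exists>K::nat. \<forall>k. growth_dim n (vspan F) k \<le> K * (k + 1) ^ (n - 1)"
proof -
  have LW: "L \<subseteq> W n" using L unfolding lie_subalgebra_def by blast
  obtain d where d: "F \<subseteq> Q d" using finite_Q[OF F(1)] F(2) LW by blast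
  define K where "K = card B + n * (2 * (d + 1) ^ (n - 1))"
  have "growth_dim n (vspan F) k \<le> K * (k + 1) ^ (n - 1)" for k
  proof -
    define S where "S = vspan (\<Union>i\<le>k. lower_central n (vspan F) i)"
    define e where "e = (k + 1) * d"
    have "(\<Union>i\<le>k. lower_central n (vspan F) i) \<subseteq> L \<inter> Q e"
    proof (rule UN_least)
      fix i assume "i \<in> {..k}"
      then have "(i + 1) * d \<le> e" by (simp add: e_def)
      then show "lower_central n (vspan F) i \<subseteq> L \<inter> Q e"
        using lc_bound[OF L F(2) d, of i] Q_mono by blast
    qed
    then have U1: "(\<Union>i\<le>k. lower_central n (vspan F) i) \<subseteq> L"
      and U2: "(\<Union>i\<le>k. lower_central n (vspan F) i) \<subseteq> Q e" by auto
    have SLQ: "S \<subseteq> L \<inter> Q e" unfolding S_def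
      using vs.span_minimal[OF U1 L_subspace[OF L]] vs.span_minimal[OF U2 Q_subspace] by (rule Int_greatest)
    have "vdim S \<le> card B + card (Eset n e :: 'k vfield set)"
    proof (rule dim_bound[OF piv_hom])
      show "vs.subspace S" by (simp add: S_def)
      show "piv ` S \<subseteq> vspan (Eset n e)"
      proof (rule image_subsetI)
        fix v assume "v \<in> S"
        then have "v \<in> W n" "v \<in> Q e" using SLQ LW by auto
        then show "piv v \<in> vspan (Eset n e)" by (rule piv_span)
      qed
      show "finite (Eset n e)" using Eset_card[OF n] by blast
      show "finite B" by fact
      fix v assume v: "v \<in> S" "piv v = 0"
      have "\<forall>j. \<exists>g. v j = var_poly 0 ^ 2 * g"
      proof
        fix j
        have "trunc (v j) = 0" using fun_cong[OF v(2), of j] by (simp add: piv_def)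
        then show "\<exists>g. v j = var_poly 0 ^ 2 * g" by (rule trunc_zero_div)
      qed
      moreover have "v \<in> L" using v(1) SLQ by auto
      ultimately have "v \<in> L20 n L" unfolding L20_def by simp
      then show "v \<in> vspan B" using B(2) by (rule subsetD[rotated])
    qed
    also have "\<dots> \<le> card B + n * (2 * (e + 1) ^ (n - 1))" using conjunct2[OF Eset_card[OF n]] by (rule add_left_mono)
    also have "\<dots> \<le> card B * (k + 1) ^ (n - 1) + n * (2 * ((d + 1) ^ (n - 1) * (k + 1) ^ (n - 1)))"
    proof (rule add_mono)
      show "card B \<le> card B * (k + 1) ^ (n - 1)" by simp
      have "e + 1 \<le> (d + 1) * (k + 1)" by (simp add: e_def algebra_simps)
      then have "(e + 1) ^ (n - 1) \<le> ((d + 1) * (k + 1)) ^ (n - 1)" by (rule power_mono) simp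
      then have "(e + 1) ^ (n - 1) \<le> (d + 1) ^ (n - 1) * (k + 1) ^ (n - 1)" by (simp only: power_mult_distrib)
      then show "n * (2 * (e + 1) ^ (n - 1)) \<le> n * (2 * ((d + 1) ^ (n - 1) * (k + 1) ^ (n - 1)))"
        by simp
    qed
    also have "\<dots> = K * (k + 1) ^ (n - 1)" by (simp add: K_def algebra_simps)
    finally show ?thesis by (simp add: growth_dim_def S_def)
  qed
  then show ?thesis by blast
qed

lemma lim1: fixes K :: real and m :: nat assumes "K > 0"
  shows "((\<lambda>k::nat. (ln K + real m * ln (real k + 1)) / ln (real k)) \<longlongrightarrow> real m) sequentially"
  using assms by real_asymp

lemma limsup_bound:
  fixes gd :: "nat \<Rightarrow> nat" and K :: nat and m :: nat
  assumes "\<And>k. gd k \<le> K * (k + 1) ^ m"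
  shows "limsup (\<lambda>k. ereal (ln (real (gd k)) / ln (real k))) \<le> ereal (real m)"
proof -
  define K' where "K' = real K + 1"
  have K': "K' \<ge> 1" by (simp add: K'_def)
  define g where "g = (\<lambda>k::nat. (ln K' + real m * ln (real k + 1)) / ln (real k))"
  have lim: "(g \<longlongrightarrow> real m) sequentially" unfolding g_def by (rule lim1) (use K' in simp)
  have ev: "eventually (\<lambda>k. ereal (ln (real (gd k)) / ln (real k)) \<le> ereal (g k)) sequentially"
    unfolding eventually_sequentially
  proof (intro exI allI impI)
    fix k :: nat assume k: "k \<ge> 2"
    then have lk: "ln (real k) > 0" by simp
    have pos: "K' * (real k + 1) ^ m > 0" using K' by simp
    have "real (gd k) \<le> real K * (real k + 1) ^ m"
      using assms[of k] by (metis of_nat_add of_nat_le_iff of_nat_mult of_nat_power of_nat_1)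
    also have "\<dots> \<le> K' * (real k + 1) ^ m" by (simp add: K'_def mult_right_mono)
    finally have gle: "real (gd k) \<le> K' * (real k + 1) ^ m" .
    have "ln (real (gd k)) \<le> ln (K' * (real k + 1) ^ m)"
    proof (cases "gd k = 0")
      case True
      have p: "1 \<le> (real k + 1) ^ m" by (simp add: one_le_power)
      have "1 \<le> K' * (real k + 1) ^ m" using mult_mono[OF K' p] K' by simp
      then have "ln (K' * (real k + 1) ^ m) \<ge> 0" by simp
      then show ?thesis using True by simp
    next
      case False
      then show ?thesis using gle pos by simp
    qed
    also have "\<dots> = ln K' + real m * ln (real k + 1)"
      using K' by (simp add: ln_mult ln_realpow)
    finally have "ln (real (gd k)) / ln (real k) \<le> g k"
      unfolding g_def using lk by (simp add: divide_right_mono)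
    then show "ereal (ln (real (gd k)) / ln (real k)) \<le> ereal (g k)" by simp
  qed
  have "limsup (\<lambda>k. ereal (ln (real (gd k)) / ln (real k))) \<le> limsup (\<lambda>k. ereal (g k))"
    by (rule Limsup_mono[OF ev])
  also have "limsup (\<lambda>k. ereal (g k)) = ereal (real m)"
    by (rule lim_imp_Limsup) (simp_all add: lim)
  finally show ?thesis .
qed

theorem mainTheorem18:
  fixes L :: "'k::field_char_0 vfield set" and n :: nat
  assumes "n \<ge> 1" and "lie_subalgebra n L" and "GKdim n L = ereal (real n)"
  shows "\<not> (\<exists>B. finite B \<and> L20 n L \<subseteq> vspan B)"
proof
  assume "\<exists>B. finite B \<and> L20 n L \<subseteq> vspan B"
  then obtain B where B: "finite B" "L20 n L \<subseteq> vspan B" by blast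
  have "GKdim n L \<le> ereal (real (n - 1))"
    unfolding GKdim_def
  proof (rule SUP_least)
    fix F assume "F \<in> {F. finite F \<and> F \<subseteq> L}"
    then have F: "finite F" "F \<subseteq> L" by auto
    obtain K where K: "\<And>k. growth_dim n (vspan F) k \<le> K * (k + 1) ^ (n - 1)"
      using growth_bound[OF assms(1,2) B F] by blast
    show "limsup (\<lambda>k. ereal (ln (real (growth_dim n (vspan F) k)) / ln (real k))) \<le> ereal (real (n - 1))"
      by (rule limsup_bound[OF K])
  qed
  then show False using assms(1,3) by simp
qed

end
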